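(* Let $l>0$, $x,y>0$, $\rho\in(-1,1)$, and let $$g=\mathbb{E}_{(Z_1,Z_2)\sim\mathrm{BVN}(\rho)}\Big[1\wedge e^{-lx^{1/2}Z_1-l^2/2}\wedge e^{-ly^{1/2}Z_2-l^2/2}\Big].$$ Then $$g=\mathrm{BVN}_{\mathrm{up}}\Big(\frac{l}{2x^{1/2}},\frac{l}{2y^{1/2}};\rho\Big)+k(x,y,\rho)+k(y,x,\rho),$$ where $k(x,y,\rho)=e^{l^2(x-1)/2}\,\mathrm{BVN}_{\mathrm{low}}\Big(\frac{a}{\sqrt{1+b^2}},U;-\frac{b}{\sqrt{1+b^2}}\Big)$ with $b=-\{(x/y)^{1/2}-\rho\}/\sqrt{1-\rho^2}$, $a=blx^{1/2}$, $U=l/(2x^{1/2})-lx^{1/2}$ (and $k(y,x,\rho)$ is given by the same formula with the roles of $x$ and $y$ exchanged).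
   Context: $\mathrm{BVN}(\rho)$ denotes the bivariate normal distribution with zero means, unit variances and correlation $\rho$; for $(Z_1,Z_2)\sim\mathrm{BVN}(\rho)$, $\mathrm{BVN}_{\mathrm{low}}(p,q;\rho)=\mathbb{P}(Z_1\le p,Z_2\le q)$ and $\mathrm{BVN}_{\mathrm{up}}(p,q;\rho)=\mathbb{P}(Z_1\ge p,Z_2\ge q)$. *)

theory Defs
  imports "HOL-Probability.Probability"
begin

definition bvn_density :: "real \<Rightarrow> real \<times> real \<Rightarrow> real" where
  "bvn_density \<rho> z =
     exp (- ((fst z)\<^sup>2 - 2 * \<rho> * fst z * snd z + (snd z)\<^sup>2) / (2 * (1 - \<rho>\<^sup>2)))
     / (2 * pi * sqrt (1 - \<rho>\<^sup>2))"

definition BVN :: "real \<Rightarrow> (real \<times> real) measure" where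
  "BVN \<rho> = density lborel (\<lambda>z. ennreal (bvn_density \<rho> z))"

definition BVN_low :: "real \<Rightarrow> real \<Rightarrow> real \<Rightarrow> real" where
  "BVN_low p q \<rho> = measure (BVN \<rho>) {z. fst z \<le> p \<and> snd z \<le> q}"

definition BVN_up :: "real \<Rightarrow> real \<Rightarrow> real \<Rightarrow> real" where
  "BVN_up p q \<rho> = measure (BVN \<rho>) {z. fst z \<ge> p \<and> snd z \<ge> q}"

definition kfun :: "real \<Rightarrow> real \<Rightarrow> real \<Rightarrow> real \<Rightarrow> real" where
  "kfun l x y \<rho> =
     (let b = - (sqrt (x / y) - \<rho>) / sqrt (1 - \<rho>\<^sup>2);
          a = b * l * sqrt x;
          U = l / (2 * sqrt x) - l * sqrt x
      in exp (l\<^sup>2 * (x - 1) / 2) *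
         BVN_low (a / sqrt (1 + b\<^sup>2)) U (- b / sqrt (1 + b\<^sup>2)))"

end

theory Submission
  imports Defs
begin

lemma phi_total: "(\<integral>\<^sup>+x. ennreal (std_normal_density x) \<partial>lborel) = 1"
  by (subst nn_integral_eq_integral) auto

definition G :: "real \<Rightarrow> ennreal" where
  "G u = (\<integral>\<^sup>+t. ennreal (std_normal_density t) * indicator {..u} t \<partial>lborel)"

lemma G_le1: "G u \<le> 1"
proof -
  have "G u \<le> (\<integral>\<^sup>+x. ennreal (std_normal_density x) \<partial>lborel)"
    unfolding G_def by (intro nn_integral_mono) (auto simp: indicator_def)
  then show ?thesis using phi_total by simp
qed

lemma phi_minus[simp]: "std_normal_density (- x) = std_normal_density x"
  by (simp add: std_normal_density_def)

lemma lemB: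
  assumes s: "\<sigma> > 0"
  shows "(\<integral>\<^sup>+t. ennreal (std_normal_density ((t - m)/\<sigma>) / \<sigma>) * indicator {..q} t \<partial>lborel) = G ((q-m)/\<sigma>)"
proof -
  have "(\<integral>\<^sup>+t. ennreal (std_normal_density ((t - m)/\<sigma>) / \<sigma>) * indicator {..q} t \<partial>lborel)
     = ennreal \<sigma> * (\<integral>\<^sup>+x. ennreal (std_normal_density x / \<sigma>) * indicator {..(q-m)/\<sigma>} x \<partial>lborel)"
    using s by (subst nn_integral_real_affine[where c=\<sigma> and t=m])
       (auto intro!: arg_cong2[where f="(*)"] nn_integral_cong simp: indicator_def field_simps)
  also have "\<dots> = (\<integral>\<^sup>+x. ennreal \<sigma> * (ennreal (std_normal_density x / \<sigma>) * indicator {..(q-m)/\<sigma>} x) \<partial>lborel)"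
    by (rule nn_integral_cmult[symmetric]) measurable
  also have "\<dots> = G ((q-m)/\<sigma>)"
    unfolding G_def using s
    by (intro nn_integral_cong) (auto simp: indicator_def ennreal_mult[symmetric])
  finally show ?thesis .
qed

lemma lemB':
  assumes s: "\<sigma> > 0"
  shows "(\<integral>\<^sup>+t. ennreal (std_normal_density ((t - m)/\<sigma>) / \<sigma>) * indicator {q..} t \<partial>lborel) = G ((m-q)/\<sigma>)"
proof -
  have "(\<integral>\<^sup>+t. ennreal (std_normal_density ((t - m)/\<sigma>) / \<sigma>) * indicator {q..} t \<partial>lborel)
     = ennreal \<sigma> * (\<integral>\<^sup>+x. ennreal (std_normal_density x / \<sigma>) * indicator {..(m-q)/\<sigma>} x \<partial>lborel)"
    using s by (subst nn_integral_real_affine[where c="-\<sigma>" and t=m])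
       (auto intro!: arg_cong2[where f="(*)"] nn_integral_cong simp: indicator_def field_simps)
  also have "\<dots> = (\<integral>\<^sup>+x. ennreal \<sigma> * (ennreal (std_normal_density x / \<sigma>) * indicator {..(m-q)/\<sigma>} x) \<partial>lborel)"
    by (rule nn_integral_cmult[symmetric]) measurable
  also have "\<dots> = G ((m-q)/\<sigma>)"
    unfolding G_def using s
    by (intro nn_integral_cong) (auto simp: indicator_def ennreal_mult[symmetric])
  finally show ?thesis .
qed

lemma lemBs:
  assumes s: "\<sigma> > 0"
  shows "(\<integral>\<^sup>+t. ennreal (std_normal_density ((t - m)/\<sigma>) / \<sigma>) * indicator {..<q} t \<partial>lborel) = G ((q-m)/\<sigma>)"
proof -
  have "(\<integral>\<^sup>+t. ennreal (std_normal_density ((t - m)/\<sigma>) / \<sigma>) * indicator {..<q} t \<partial>lborel)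
    = (\<integral>\<^sup>+t. ennreal (std_normal_density ((t - m)/\<sigma>) / \<sigma>) * indicator {..q} t \<partial>lborel)"
    by (intro nn_integral_cong_AE eventually_mono[OF AE_lborel_singleton[of q]]) (auto simp: indicator_def)
  then show ?thesis using lemB[OF s] by simp
qed

lemma dens_factor:
  assumes "\<bar>r\<bar> < 1"
  shows "bvn_density r (s,t) = std_normal_density s * (std_normal_density ((t - r * s)/sqrt (1 - r\<^sup>2)) / sqrt (1 - r\<^sup>2))"
proof -
  have p: "1 - r\<^sup>2 > 0" using assms by (simp add: abs_square_less_1)
  have e: "- (s\<^sup>2 - 2 * r * s * t + t\<^sup>2) / (2 * (1 - r\<^sup>2)) = - s\<^sup>2/2 + - ((t - r * s)/sqrt (1 - r\<^sup>2))\<^sup>2/2"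
    using p by (simp add: power_divide field_simps power2_eq_square)
  have x: "exp (- (s\<^sup>2 - 2 * r * s * t + t\<^sup>2) / (2 * (1 - r\<^sup>2))) = exp (- s\<^sup>2/2) * exp (- ((t - r * s)/sqrt (1 - r\<^sup>2))\<^sup>2/2)"
    unfolding e exp_add ..
  have q: "sqrt (2*pi) * sqrt (2*pi) = 2 * pi" by simp
  show ?thesis unfolding bvn_density_def fst_conv snd_conv x std_normal_density_def
    using p q by (simp add: field_simps)
qed

lemma bvn_meas[measurable]: "bvn_density r \<in> borel_measurable (lborel \<Otimes>\<^sub>M lborel)"
  unfolding bvn_density_def by measurable

lemma lemA:
  assumes r: "\<bar>r\<bar> < 1" and g[measurable]: "g \<in> borel_measurable (lborel \<Otimes>\<^sub>M lborel)"
  shows "(\<integral>\<^sup>+z. ennreal (bvn_density r z) * g z \<partial>lborel)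
    = (\<integral>\<^sup>+s. \<integral>\<^sup>+t. ennreal (std_normal_density s * (std_normal_density ((t - r * s)/sqrt (1 - r\<^sup>2)) / sqrt (1 - r\<^sup>2))) * g (s,t) \<partial>lborel \<partial>lborel)"
proof -
  have m: "(\<lambda>z. ennreal (bvn_density r z) * g z) \<in> borel_measurable (lborel \<Otimes>\<^sub>M lborel)"
    by measurable
  have "(\<integral>\<^sup>+z. ennreal (bvn_density r z) * g z \<partial>lborel) = (\<integral>\<^sup>+z. ennreal (bvn_density r z) * g z \<partial>(lborel \<Otimes>\<^sub>M lborel))"
    by (simp only: lborel_prod)
  also have "\<dots> = (\<integral>\<^sup>+s. \<integral>\<^sup>+t. ennreal (bvn_density r (s,t)) * g (s,t) \<partial>lborel \<partial>lborel)"
    by (rule lborel.nn_integral_fst[symmetric, OF m])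
  also have "\<dots> = (\<integral>\<^sup>+s. \<integral>\<^sup>+t. ennreal (std_normal_density s * (std_normal_density ((t - r * s)/sqrt (1 - r\<^sup>2)) / sqrt (1 - r\<^sup>2))) * g (s,t) \<partial>lborel \<partial>lborel)"
    using dens_factor[OF r] by simp
  finally show ?thesis .
qed

lemma lemA':
  assumes r: "\<bar>r\<bar> < 1" and g[measurable]: "g \<in> borel_measurable (lborel \<Otimes>\<^sub>M lborel)"
  shows "(\<integral>\<^sup>+z. ennreal (bvn_density r z) * g z \<partial>lborel)
    = (\<integral>\<^sup>+t. \<integral>\<^sup>+s. ennreal (std_normal_density t * (std_normal_density ((s - r * t)/sqrt (1 - r\<^sup>2)) / sqrt (1 - r\<^sup>2))) * g (s,t) \<partial>lborel \<partial>lborel)"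
proof -
  have m: "(\<lambda>z. ennreal (bvn_density r z) * g z) \<in> borel_measurable (lborel \<Otimes>\<^sub>M lborel)"
    by measurable
  have "(\<integral>\<^sup>+z. ennreal (bvn_density r z) * g z \<partial>lborel) = (\<integral>\<^sup>+z. ennreal (bvn_density r z) * g z \<partial>(lborel \<Otimes>\<^sub>M lborel))"
    by (simp only: lborel_prod)
  also have "\<dots> = (\<integral>\<^sup>+t. \<integral>\<^sup>+s. ennreal (bvn_density r (s,t)) * g (s,t) \<partial>lborel \<partial>lborel)"
    by (rule lborel_pair.nn_integral_snd[symmetric, OF m])
  also have "\<dots> = (\<integral>\<^sup>+t. \<integral>\<^sup>+s. ennreal (bvn_density r (t,s)) * g (s,t) \<partial>lborel \<partial>lborel)"
    by (intro nn_integral_cong) (simp add: bvn_density_def field_simps)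
  also have "\<dots> = (\<integral>\<^sup>+t. \<integral>\<^sup>+s. ennreal (std_normal_density t * (std_normal_density ((s - r * t)/sqrt (1 - r\<^sup>2)) / sqrt (1 - r\<^sup>2))) * g (s,t) \<partial>lborel \<partial>lborel)"
    using dens_factor[OF r] by simp
  finally show ?thesis .
qed

lemma pieceF:
  assumes r: "\<bar>r\<bar> < 1" and c[measurable]: "c \<in> borel_measurable borel"
    and g[measurable]: "(\<lambda>z. indicator {z. snd z \<in> S (fst z)} z :: ennreal) \<in> borel_measurable (lborel \<Otimes>\<^sub>M lborel)"
    and S[measurable]: "\<And>s. S s \<in> sets borel"
  shows "(\<integral>\<^sup>+z. ennreal (bvn_density r z) * (c (fst z) * indicator {z. snd z \<in> S (fst z)} z) \<partial>lborel)
    = (\<integral>\<^sup>+s. ennreal (std_normal_density s) * c s * (\<integral>\<^sup>+t. ennreal (std_normal_density ((t - r * s)/sqrt (1 - r\<^sup>2)) / sqrt (1 - r\<^sup>2)) * indicator (S s) t \<partial>lborel) \<partial>lborel)" (is "?lhs = ?rhs")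
proof -
  have p: "1 - r\<^sup>2 > 0" using r by (simp add: abs_square_less_1)
  have "(\<integral>\<^sup>+z. ennreal (bvn_density r z) * (c (fst z) * indicator {z. snd z \<in> S (fst z)} z) \<partial>lborel)
    = (\<integral>\<^sup>+s. \<integral>\<^sup>+t. ennreal (std_normal_density s * (std_normal_density ((t - r * s)/sqrt (1 - r\<^sup>2)) / sqrt (1 - r\<^sup>2))) * (c (fst (s,t)) * indicator {z. snd z \<in> S (fst z)} (s,t)) \<partial>lborel \<partial>lborel)"
    by (rule lemA[OF r]) measurable
  also have "\<dots> = (\<integral>\<^sup>+s. \<integral>\<^sup>+t. (ennreal (std_normal_density s) * c s) * (ennreal (std_normal_density ((t - r * s)/sqrt (1 - r\<^sup>2)) / sqrt (1 - r\<^sup>2)) * indicator (S s) t) \<partial>lborel \<partial>lborel)"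
    apply (intro nn_integral_cong)
    apply (subst ennreal_mult'[OF normal_density_nonneg])
    by (simp add: indicator_def mult_ac)
  also have "\<dots> = ?rhs"
    by (intro nn_integral_cong nn_integral_cmult) measurable
  finally show ?thesis .
qed

lemma pieceF':
  assumes r: "\<bar>r\<bar> < 1" and c[measurable]: "c \<in> borel_measurable borel"
    and g[measurable]: "(\<lambda>z. indicator {z. fst z \<in> S (snd z)} z :: ennreal) \<in> borel_measurable (lborel \<Otimes>\<^sub>M lborel)"
    and S[measurable]: "\<And>s. S s \<in> sets borel"
  shows "(\<integral>\<^sup>+z. ennreal (bvn_density r z) * (c (snd z) * indicator {z. fst z \<in> S (snd z)} z) \<partial>lborel)
    = (\<integral>\<^sup>+t. ennreal (std_normal_density t) * c t * (\<integral>\<^sup>+s. ennreal (std_normal_density ((s - r * t)/sqrt (1 - r\<^sup>2)) / sqrt (1 - r\<^sup>2)) * indicator (S t) s \<partial>lborel) \<partial>lborel)" (is "?lhs = ?rhs")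
proof -
  have p: "1 - r\<^sup>2 > 0" using r by (simp add: abs_square_less_1)
  have "(\<integral>\<^sup>+z. ennreal (bvn_density r z) * (c (snd z) * indicator {z. fst z \<in> S (snd z)} z) \<partial>lborel)
    = (\<integral>\<^sup>+t. \<integral>\<^sup>+s. ennreal (std_normal_density t * (std_normal_density ((s - r * t)/sqrt (1 - r\<^sup>2)) / sqrt (1 - r\<^sup>2))) * (c (snd (s,t)) * indicator {z. fst z \<in> S (snd z)} (s,t)) \<partial>lborel \<partial>lborel)"
    by (rule lemA'[OF r]) measurable
  also have "\<dots> = (\<integral>\<^sup>+t. \<integral>\<^sup>+s. (ennreal (std_normal_density t) * c t) * (ennreal (std_normal_density ((s - r * t)/sqrt (1 - r\<^sup>2)) / sqrt (1 - r\<^sup>2)) * indicator (S t) s) \<partial>lborel \<partial>lborel)"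
    apply (intro nn_integral_cong)
    apply (subst ennreal_mult'[OF normal_density_nonneg])
    by (simp add: indicator_def mult_ac)
  also have "\<dots> = ?rhs"
    by (intro nn_integral_cong nn_integral_cmult) measurable
  finally show ?thesis .
qed

lemma G_fin: "G u \<noteq> \<top>"
  using G_le1[of u] by (auto simp: top_unique)

lemma G_mono: "u \<le> v \<Longrightarrow> G u \<le> G v"
  unfolding G_def by (intro nn_integral_mono) (auto simp: indicator_def)

lemma G_meas[measurable]: "G \<in> borel_measurable borel"
proof -
  have e: "G = (\<lambda>u. ennreal (enn2real (G u)))"
    using G_fin by (simp add: fun_eq_iff ennreal_enn2real_if)
  have "mono (\<lambda>u. enn2real (G u))"
    by (intro monoI enn2real_mono G_mono) (simp_all add: G_fin less_top[symmetric])
  then have [measurable]: "(\<lambda>u. enn2real (G u)) \<in> borel_measurable borel"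
    by (rule borel_measurable_mono)
  show ?thesis by (subst e) measurable
qed

lemma bvn_meas2[measurable]: "bvn_density r \<in> borel_measurable lborel"
  using bvn_meas[of r] by (simp add: lborel_prod)

lemma bound1:
  assumes "\<And>s. c s \<le> 1"
  shows "(\<integral>\<^sup>+s. ennreal (std_normal_density s) * c s * G (f s) \<partial>lborel) \<le> 1"
proof -
  have "(\<integral>\<^sup>+s. ennreal (std_normal_density s) * c s * G (f s) \<partial>lborel) \<le> (\<integral>\<^sup>+s. ennreal (std_normal_density s) \<partial>lborel)"
  proof (intro nn_integral_mono)
    fix s
    have "c s * G (f s) \<le> 1 * 1" using assms[of s] G_le1[of "f s"] by (intro mult_mono) auto
    then have "ennreal (std_normal_density s) * (c s * G (f s)) \<le> ennreal (std_normal_density s) * 1"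
      by (intro mult_left_mono) auto
    then show "ennreal (std_normal_density s) * c s * G (f s) \<le> ennreal (std_normal_density s)"
      by (simp add: mult.assoc)
  qed
  then show ?thesis using phi_total by simp
qed

lemma ind_le1: "(indicator A x :: ennreal) \<le> 1"
  by (simp add: indicator_def)

lemma BVN_low_formula:
  assumes r: "\<bar>r\<bar> < 1"
  shows "ennreal (BVN_low p q r) = (\<integral>\<^sup>+t. ennreal (std_normal_density t) * indicator {..q} t * G ((p - r * t) / sqrt (1 - r\<^sup>2)) \<partial>lborel)"
proof -
  have pp: "sqrt (1 - r\<^sup>2) > 0" using r by (simp add: abs_square_less_1)
  have set: "{z::real\<times>real. fst z \<le> p \<and> snd z \<le> q} \<in> sets lborel"
  proof -
    have "{z\<in>space (lborel \<Otimes>\<^sub>M lborel). fst z \<le> p \<and> snd z \<le> q} \<in> sets (lborel \<Otimes>\<^sub>M lborel)" by measurable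
    then show ?thesis by (simp only: lborel_prod) simp
  qed
  have "emeasure (BVN r) {z. fst z \<le> p \<and> snd z \<le> q} = (\<integral>\<^sup>+z. ennreal (bvn_density r z) * indicator {z. fst z \<le> p \<and> snd z \<le> q} z \<partial>lborel)"
    unfolding BVN_def using set by (subst emeasure_density) auto
  also have "\<dots> = (\<integral>\<^sup>+z. ennreal (bvn_density r z) * (indicator {..q} (snd z) * indicator {z. fst z \<in> {..p}} z) \<partial>lborel)"
    by (intro nn_integral_cong) (auto simp: indicator_def)
  also have "\<dots> = (\<integral>\<^sup>+t. ennreal (std_normal_density t) * indicator {..q} t * (\<integral>\<^sup>+s. ennreal (std_normal_density ((s - r * t)/sqrt (1 - r\<^sup>2)) / sqrt (1 - r\<^sup>2)) * indicator {..p} s \<partial>lborel) \<partial>lborel)"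
    by (rule pieceF'[OF r]) measurable
  also have "\<dots> = (\<integral>\<^sup>+t. ennreal (std_normal_density t) * indicator {..q} t * G ((p - r * t) / sqrt (1 - r\<^sup>2)) \<partial>lborel)"
    using lemB[OF pp] by simp
  finally have e: "emeasure (BVN r) {z. fst z \<le> p \<and> snd z \<le> q} = \<dots>" .
  have "emeasure (BVN r) {z. fst z \<le> p \<and> snd z \<le> q} \<noteq> \<top>"
    unfolding e using bound1[of "indicator {..q}" "\<lambda>t. (p - r * t) / sqrt (1 - r\<^sup>2)", OF ind_le1]
    by (auto simp: top_unique)
  then show ?thesis unfolding BVN_low_def e[symmetric] by (simp add: emeasure_eq_ennreal_measure)
qed

lemma BVN_up_formula:
  assumes r: "\<bar>r\<bar> < 1"
  shows "ennreal (BVN_up p q r) = (\<integral>\<^sup>+s. ennreal (std_normal_density s) * indicator {p..} s * G ((r * s - q) / sqrt (1 - r\<^sup>2)) \<partial>lborel)"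
proof -
  have pp: "sqrt (1 - r\<^sup>2) > 0" using r by (simp add: abs_square_less_1)
  have set: "{z::real\<times>real. fst z \<ge> p \<and> snd z \<ge> q} \<in> sets lborel"
  proof -
    have "{z\<in>space (lborel \<Otimes>\<^sub>M lborel). fst z \<ge> p \<and> snd z \<ge> q} \<in> sets (lborel \<Otimes>\<^sub>M lborel)" by measurable
    then show ?thesis by (simp only: lborel_prod) simp
  qed
  have "emeasure (BVN r) {z. fst z \<ge> p \<and> snd z \<ge> q} = (\<integral>\<^sup>+z. ennreal (bvn_density r z) * indicator {z. fst z \<ge> p \<and> snd z \<ge> q} z \<partial>lborel)"
    unfolding BVN_def using set by (subst emeasure_density) auto
  also have "\<dots> = (\<integral>\<^sup>+z. ennreal (bvn_density r z) * (indicator {p..} (fst z) * indicator {z. snd z \<in> {q..}} z) \<partial>lborel)"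
    by (intro nn_integral_cong) (auto simp: indicator_def)
  also have "\<dots> = (\<integral>\<^sup>+s. ennreal (std_normal_density s) * indicator {p..} s * (\<integral>\<^sup>+t. ennreal (std_normal_density ((t - r * s)/sqrt (1 - r\<^sup>2)) / sqrt (1 - r\<^sup>2)) * indicator {q..} t \<partial>lborel) \<partial>lborel)"
    by (rule pieceF[OF r]) measurable
  also have "\<dots> = (\<integral>\<^sup>+s. ennreal (std_normal_density s) * indicator {p..} s * G ((r * s - q) / sqrt (1 - r\<^sup>2)) \<partial>lborel)"
    using lemB'[OF pp] by simp
  finally have e: "emeasure (BVN r) {z. fst z \<ge> p \<and> snd z \<ge> q} = \<dots>" .
  have "emeasure (BVN r) {z. fst z \<ge> p \<and> snd z \<ge> q} \<noteq> \<top>"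
    unfolding e using bound1[of "indicator {p..}" "\<lambda>s. (r * s - q) / sqrt (1 - r\<^sup>2)", OF ind_le1]
    by (auto simp: top_unique)
  then show ?thesis unfolding BVN_up_def e[symmetric] by (simp add: emeasure_eq_ennreal_measure)
qed

lemma lemK:
  assumes l: "l > 0" and x: "x > 0" and y: "y > 0" and r: "\<bar>\<rho>\<bar> < 1"
  shows "(\<integral>\<^sup>+s. ennreal (std_normal_density s) * (ennreal (exp (- l * sqrt x * s - l\<^sup>2 / 2)) * indicator {- (l / (2 * sqrt x))<..} s)
            * G ((sqrt (x / y) * s - \<rho> * s) / sqrt (1 - \<rho>\<^sup>2)) \<partial>lborel) = ennreal (kfun l x y \<rho>)"
proof -
  define \<sigma> where "\<sigma> = sqrt (1 - \<rho>\<^sup>2)"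
  define b where "b = - (sqrt (x / y) - \<rho>) / \<sigma>"
  define a where "a = b * l * sqrt x"
  define U where "U = l / (2 * sqrt x) - l * sqrt x"
  define c where "c = - b / sqrt (1 + b\<^sup>2)"
  define K where "K = exp (l\<^sup>2 * (x - 1) / 2)"
  have sp: "\<sigma> > 0" unfolding \<sigma>_def using r by (simp add: abs_square_less_1)
  have q1: "sqrt (1 + b\<^sup>2) > 0" by (simp add: add_pos_nonneg)
  have q1s: "sqrt (1 + b\<^sup>2) * sqrt (1 + b\<^sup>2) = 1 + b\<^sup>2" by (simp add: add_nonneg_nonneg)
  have cc: "1 - c\<^sup>2 = 1 / (1 + b\<^sup>2)"
    unfolding c_def using q1 by (simp add: power_divide field_simps add_nonneg_nonneg)
  have cabs: "\<bar>c\<bar> < 1"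
  proof -
    have "1 / (1 + b\<^sup>2) > 0" by (simp add: add_pos_nonneg)
    then have "c\<^sup>2 < 1" using cc by linarith
    then show ?thesis by (simp add: abs_square_less_1)
  qed
  have sc: "sqrt (1 - c\<^sup>2) = 1 / sqrt (1 + b\<^sup>2)" unfolding cc by (simp add: real_sqrt_divide)
  have lin: "(a / sqrt (1 + b\<^sup>2) - c * t) / sqrt (1 - c\<^sup>2) = a + b * t" for t
    unfolding sc c_def using q1 by (simp add: field_simps real_sqrt_divide)
  have kf: "kfun l x y \<rho> = K * BVN_low (a / sqrt (1 + b\<^sup>2)) U c"
    unfolding kfun_def Let_def K_def a_def b_def U_def c_def \<sigma>_def by simp
  have "ennreal (kfun l x y \<rho>) = ennreal K * ennreal (BVN_low (a / sqrt (1 + b\<^sup>2)) U c)"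
    unfolding kf K_def by (simp add: ennreal_mult measure_nonneg BVN_low_def)
  also have "\<dots> = ennreal K * (\<integral>\<^sup>+t. ennreal (std_normal_density t) * indicator {..U} t * G (a + b * t) \<partial>lborel)"
    unfolding BVN_low_formula[OF cabs] lin ..
  also have "\<dots> = (\<integral>\<^sup>+t. ennreal K * (ennreal (std_normal_density t) * indicator {..U} t * G (a + b * t)) \<partial>lborel)"
    by (rule nn_integral_cmult[symmetric]) measurable
  finally have R: "ennreal (kfun l x y \<rho>) = \<dots>" .
  have sx: "sqrt x * sqrt x = x" using x by simp
  have sx0: "sqrt x > 0" using x by simp
  have f1: "std_normal_density (- (l * sqrt x) - t) * exp (- l * sqrt x * (- (l * sqrt x) - t) - l\<^sup>2 / 2) = K * std_normal_density t" for t
  proof -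
    have "- (- (l * sqrt x) - t)\<^sup>2 / 2 + (- l * sqrt x * (- (l * sqrt x) - t) - l\<^sup>2 / 2) = l\<^sup>2 * (x - 1) / 2 + (- t\<^sup>2 / 2)"
      using x by (simp add: power2_eq_square field_simps sx)
    then have "exp (- (- (l * sqrt x) - t)\<^sup>2 / 2) * exp (- l * sqrt x * (- (l * sqrt x) - t) - l\<^sup>2 / 2) = K * exp (- t\<^sup>2 / 2)"
      unfolding K_def exp_add[symmetric] by simp
    then show ?thesis unfolding std_normal_density_def by (simp add: field_simps)
  qed
  have f2: "(sqrt (x / y) * (- (l * sqrt x) - t) - \<rho> * (- (l * sqrt x) - t)) / \<sigma> = a + b * t" for t
    unfolding a_def b_def using sp by (simp add: field_simps)
  have f3: "(- (l / (2 * sqrt x)) < - (l * sqrt x) - t) \<longleftrightarrow> t < U" for t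
    unfolding U_def by auto
  define F where "F = (\<lambda>s. ennreal (std_normal_density s) * (ennreal (exp (- l * sqrt x * s - l\<^sup>2 / 2)) * indicator {- (l / (2 * sqrt x))<..} s)
            * G ((sqrt (x / y) * s - \<rho> * s) / \<sigma>))"
  have Fm: "F \<in> borel_measurable borel" unfolding F_def by measurable
  have "(\<integral>\<^sup>+s. ennreal (std_normal_density s) * (ennreal (exp (- l * sqrt x * s - l\<^sup>2 / 2)) * indicator {- (l / (2 * sqrt x))<..} s)
            * G ((sqrt (x / y) * s - \<rho> * s) / \<sigma>) \<partial>lborel)
     = (\<integral>\<^sup>+t. F (- (l * sqrt x) + (- 1) * t) \<partial>lborel)"
    using nn_integral_real_affine[OF Fm, of "-1" "- (l * sqrt x)"] unfolding F_def by simp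
  also have "\<dots> = (\<integral>\<^sup>+t. ennreal K * (ennreal (std_normal_density t) * indicator {..U} t * G (a + b * t)) \<partial>lborel)"
  proof (intro nn_integral_cong_AE eventually_mono[OF AE_lborel_singleton[of U]] impI)
    fix t assume tU: "t \<noteq> U"
    have e: "- (l * sqrt x) + (- 1) * t = - (l * sqrt x) - t" by simp
    have m: "ennreal (std_normal_density (- (l * sqrt x) - t)) * ennreal (exp (- l * sqrt x * (- (l * sqrt x) - t) - l\<^sup>2 / 2))
       = ennreal K * ennreal (std_normal_density t)"
      using f1[of t] by (simp add: ennreal_mult[symmetric] K_def)
    have H: "ennreal (std_normal_density (- (l * sqrt x) + (- 1) * t)) * (ennreal (exp (- l * sqrt x * (- (l * sqrt x) + (- 1) * t) - l\<^sup>2 / 2)) * indicator {- (l / (2 * sqrt x))<..} (- (l * sqrt x) + (- 1) * t))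
            * G ((sqrt (x / y) * (- (l * sqrt x) + (- 1) * t) - \<rho> * (- (l * sqrt x) + (- 1) * t)) / \<sigma>)
         = ennreal K * (ennreal (std_normal_density t) * indicator {..U} t * G (a + b * t))"
    proof (cases "t < U")
      case True
      then show ?thesis using f3[of t] m f2[of t] e by (simp add: indicator_def mult_ac)
    next
      case False
      then show ?thesis using f3[of t] tU e by (simp add: indicator_def)
    qed
    show "F (- (l * sqrt x) + (- 1) * t) = ennreal K * (ennreal (std_normal_density t) * indicator {..U} t * G (a + b * t))"
      unfolding F_def by (rule H)
  qed
  finally show ?thesis unfolding R \<sigma>_def .
qed

lemma exp_ge1_iff: "exp (- l * sqrt x * s - l\<^sup>2 / 2) \<ge> 1 \<longleftrightarrow> s \<le> - (l / (2 * sqrt x))"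
  if l: "l > 0" and x: "x > 0" for l x s :: real
proof -
  have sx: "sqrt x > 0" using x by simp
  have "exp (- l * sqrt x * s - l\<^sup>2 / 2) \<ge> 1 \<longleftrightarrow> 0 \<le> - l * sqrt x * s - l\<^sup>2 / 2"
    by (rule one_le_exp_iff)
  also have "\<dots> \<longleftrightarrow> (l * sqrt x) * s \<le> (l * sqrt x) * (- (l / (2 * sqrt x)))"
    using l sx by (simp add: field_simps power2_eq_square) arith
  also have "\<dots> \<longleftrightarrow> s \<le> - (l / (2 * sqrt x))"
    using l sx by (intro mult_le_cancel_left_pos) simp
  finally show ?thesis .
qed

lemma exp_le_iff: "exp (- l * sqrt x * s - l\<^sup>2 / 2) \<le> exp (- l * sqrt y * t - l\<^sup>2 / 2) \<longleftrightarrow> t \<le> sqrt (x / y) * s"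
  if l: "l > 0" and x: "x > 0" and y: "y > 0" for l x y s t :: real
proof -
  have sx: "sqrt x > 0" "sqrt y > 0" using x y by simp_all
  have "exp (- l * sqrt x * s - l\<^sup>2 / 2) \<le> exp (- l * sqrt y * t - l\<^sup>2 / 2) \<longleftrightarrow> l * (sqrt y * t) \<le> l * (sqrt x * s)"
    by (simp add: mult.assoc)
  also have "\<dots> \<longleftrightarrow> sqrt y * t \<le> sqrt x * s" using l by simp
  also have "\<dots> \<longleftrightarrow> t \<le> sqrt (x / y) * s"
    using sx by (simp add: real_sqrt_divide field_simps)
  finally show ?thesis .
qed

lemma exp_less_iff: "exp (- l * sqrt y * t - l\<^sup>2 / 2) < exp (- l * sqrt x * s - l\<^sup>2 / 2) \<longleftrightarrow> s < sqrt (y / x) * t"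
  if l: "l > 0" and x: "x > 0" and y: "y > 0" for l x y s t :: real
proof -
  have sx: "sqrt x > 0" "sqrt y > 0" using x y by simp_all
  have "exp (- l * sqrt y * t - l\<^sup>2 / 2) < exp (- l * sqrt x * s - l\<^sup>2 / 2) \<longleftrightarrow> l * (sqrt x * s) < l * (sqrt y * t)"
    by (simp add: mult.assoc)
  also have "\<dots> \<longleftrightarrow> sqrt x * s < sqrt y * t" using l by simp
  also have "\<dots> \<longleftrightarrow> s < sqrt (y / x) * t"
    using sx by (simp add: real_sqrt_divide field_simps)
  finally show ?thesis .
qed

lemma decomp:
  fixes l x y s t :: real
  assumes l: "l > 0" and x: "x > 0" and y: "y > 0"
  shows "ennreal (min 1 (min (exp (- l * sqrt x * s - l\<^sup>2 / 2)) (exp (- l * sqrt y * t - l\<^sup>2 / 2))))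
    = indicator {..- (l / (2 * sqrt x))} s * indicator {..- (l / (2 * sqrt y))} t
    + (ennreal (exp (- l * sqrt x * s - l\<^sup>2 / 2)) * indicator {- (l / (2 * sqrt x))<..} s) * indicator {..sqrt (x / y) * s} t
    + (ennreal (exp (- l * sqrt y * t - l\<^sup>2 / 2)) * indicator {- (l / (2 * sqrt y))<..} t) * indicator {..<sqrt (y / x) * t} s"
proof -
  define A where "A = exp (- l * sqrt x * s - l\<^sup>2 / 2)"
  define B where "B = exp (- l * sqrt y * t - l\<^sup>2 / 2)"
  have hA: "1 \<le> A \<longleftrightarrow> s \<le> - (l / (2 * sqrt x))" unfolding A_def by (rule exp_ge1_iff[OF l x])
  have hB: "1 \<le> B \<longleftrightarrow> t \<le> - (l / (2 * sqrt y))" unfolding B_def by (rule exp_ge1_iff[OF l y])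
  have hAB: "A \<le> B \<longleftrightarrow> t \<le> sqrt (x / y) * s" unfolding A_def B_def by (rule exp_le_iff[OF l x y])
  have hBA': "B < A \<longleftrightarrow> s < sqrt (y / x) * t" unfolding A_def B_def by (rule exp_less_iff[OF l x y])
  have main: "ennreal (min 1 (min A B))
    = indicator {..- (l / (2 * sqrt x))} s * indicator {..- (l / (2 * sqrt y))} t
    + (ennreal A * indicator {- (l / (2 * sqrt x))<..} s) * indicator {..sqrt (x / y) * s} t
    + (ennreal B * indicator {- (l / (2 * sqrt y))<..} t) * indicator {..<sqrt (y / x) * t} s"
  proof (cases "s \<le> - (l / (2 * sqrt x)) \<and> t \<le> - (l / (2 * sqrt y))")
    case True
    then have "min 1 (min A B) = 1" using hA hB by auto
    then show ?thesis using True by (simp add: indicator_def)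
  next
    case F1: False
    show ?thesis
    proof (cases "- (l / (2 * sqrt x)) < s \<and> t \<le> sqrt (x / y) * s")
      case True
      then have "min 1 (min A B) = A" using hA hAB by auto
      moreover have "\<not> s < sqrt (y / x) * t" using True hAB hBA' by auto
      ultimately show ?thesis using True F1 by (simp add: indicator_def)
    next
      case False
      then have c: "B < A" "B < 1" using F1 hA hB hAB hBA' by auto
      then have "min 1 (min A B) = B" by auto
      moreover have "s < sqrt (y / x) * t" "- (l / (2 * sqrt y)) < t" using c hBA' hB by auto
      ultimately show ?thesis using False F1 by (auto simp add: indicator_def)
    qed
  qed
  then show ?thesis unfolding A_def B_def .
qed

lemma pred_atMost_meas[measurable (raw)]:
  assumes [measurable]: "f \<in> borel_measurable M" "g \<in> borel_measurable M"
  shows "Measurable.pred M (\<lambda>z. (f z::real) \<in> {..g z})"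
  unfolding atMost_iff by measurable

lemma pred_lessThan_meas[measurable (raw)]:
  assumes [measurable]: "f \<in> borel_measurable M" "g \<in> borel_measurable M"
  shows "Measurable.pred M (\<lambda>z. (f z::real) \<in> {..<g z})"
  unfolding lessThan_iff by measurable

lemma kfun_nonneg: "kfun l x y \<rho> \<ge> 0"
  unfolding kfun_def Let_def BVN_low_def by simp

theorem lemma9:
  fixes l x y \<rho> :: real
  assumes "l > 0" and "x > 0" and "y > 0" and "-1 < \<rho>" and "\<rho> < 1"
  shows "(\<integral>z. min 1 (min (exp (- l * sqrt x * fst z - l\<^sup>2 / 2))
                            (exp (- l * sqrt y * snd z - l\<^sup>2 / 2))) \<partial>BVN \<rho>)
         = BVN_up (l / (2 * sqrt x)) (l / (2 * sqrt y)) \<rho> + kfun l x y \<rho> + kfun l y x \<rho>"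
proof -
  note l = assms(1) and x = assms(2) and y = assms(3)
  have r: "\<bar>\<rho>\<bar> < 1" using assms by auto
  have pp: "sqrt (1 - \<rho>\<^sup>2) > 0" using r by (simp add: abs_square_less_1)
  define p where "p = l / (2 * sqrt x)"
  define q where "q = l / (2 * sqrt y)"
  define F where "F = (\<lambda>z::real\<times>real. min 1 (min (exp (- l * sqrt x * fst z - l\<^sup>2 / 2))
                            (exp (- l * sqrt y * snd z - l\<^sup>2 / 2))))"
  define D0 where "D0 = (\<lambda>z::real\<times>real. ennreal (bvn_density \<rho> z) * (indicator {..- p} (fst z) * indicator {z. snd z \<in> {..- q}} z))"
  define D1 where "D1 = (\<lambda>z::real\<times>real. ennreal (bvn_density \<rho> z) * ((ennreal (exp (- l * sqrt x * fst z - l\<^sup>2 / 2)) * indicator {- p<..} (fst z)) * indicator {z. snd z \<in> {..sqrt (x / y) * fst z}} z))"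
  define D2 where "D2 = (\<lambda>z::real\<times>real. ennreal (bvn_density \<rho> z) * ((ennreal (exp (- l * sqrt y * snd z - l\<^sup>2 / 2)) * indicator {- q<..} (snd z)) * indicator {z. fst z \<in> {..<sqrt (y / x) * snd z}} z))"
  have lp: "lborel \<Otimes>\<^sub>M lborel = (lborel :: (real \<times> real) measure)" by (rule lborel_prod)
  have Fm0: "F \<in> borel_measurable (lborel \<Otimes>\<^sub>M lborel)" unfolding F_def by measurable
  have Fm: "F \<in> borel_measurable lborel" using Fm0 unfolding lp .
  have D0m0: "D0 \<in> borel_measurable (lborel \<Otimes>\<^sub>M lborel)" unfolding D0_def by measurable
  have D1m0: "D1 \<in> borel_measurable (lborel \<Otimes>\<^sub>M lborel)" unfolding D1_def by measurable
  have D2m0: "D2 \<in> borel_measurable (lborel \<Otimes>\<^sub>M lborel)" unfolding D2_def by measurable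
  have D0m: "D0 \<in> borel_measurable lborel" using D0m0 unfolding lp .
  have D1m: "D1 \<in> borel_measurable lborel" using D1m0 unfolding lp .
  have D2m: "D2 \<in> borel_measurable lborel" using D2m0 unfolding lp .
  have "(\<integral>z. min 1 (min (exp (- l * sqrt x * fst z - l\<^sup>2 / 2))
                            (exp (- l * sqrt y * snd z - l\<^sup>2 / 2))) \<partial>BVN \<rho>) = integral\<^sup>L (BVN \<rho>) F"
    unfolding F_def ..
  also have "\<dots> = enn2real (\<integral>\<^sup>+z. ennreal (F z) \<partial>BVN \<rho>)"
  proof (rule integral_eq_nn_integral)
    show "F \<in> borel_measurable (BVN \<rho>)" using Fm by (simp add: BVN_def)
    show "AE z in BVN \<rho>. 0 \<le> F z" by (simp add: F_def)
  qed
  also have "(\<integral>\<^sup>+z. ennreal (F z) \<partial>BVN \<rho>) = (\<integral>\<^sup>+z. ennreal (bvn_density \<rho> z) * ennreal (F z) \<partial>lborel)"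
    unfolding BVN_def by (rule nn_integral_density) (use Fm in measurable)
  also have "\<dots> = (\<integral>\<^sup>+z. D0 z + D1 z + D2 z \<partial>lborel)"
  proof (intro nn_integral_cong)
    fix z :: "real \<times> real"
    show "ennreal (bvn_density \<rho> z) * ennreal (F z) = D0 z + D1 z + D2 z"
      unfolding F_def D0_def D1_def D2_def decomp[OF l x y, of "fst z" "snd z"] p_def q_def
      by (simp add: indicator_def distrib_left)
  qed
  also have "\<dots> = integral\<^sup>N lborel D0 + integral\<^sup>N lborel D1 + integral\<^sup>N lborel D2"
    using D0m D1m D2m by (simp add: nn_integral_add)
  also have "integral\<^sup>N lborel D0 = ennreal (BVN_up p q \<rho>)"
  proof -
    have "integral\<^sup>N lborel D0 = (\<integral>\<^sup>+s. ennreal (std_normal_density s) * indicator {..- p} s * (\<integral>\<^sup>+t. ennreal (std_normal_density ((t - \<rho> * s)/sqrt (1 - \<rho>\<^sup>2)) / sqrt (1 - \<rho>\<^sup>2)) * indicator {..- q} t \<partial>lborel) \<partial>lborel)"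
      unfolding D0_def by (rule pieceF[OF r]) measurable
    also have "\<dots> = (\<integral>\<^sup>+s. ennreal (std_normal_density s) * indicator {..- p} s * G ((- q - \<rho> * s) / sqrt (1 - \<rho>\<^sup>2)) \<partial>lborel)"
      using lemB[OF pp] by simp
    finally have e0: "integral\<^sup>N lborel D0 = \<dots>" .
    define H where "H = (\<lambda>s. ennreal (std_normal_density s) * indicator {p..} s * G ((\<rho> * s - q) / sqrt (1 - \<rho>\<^sup>2)))"
    have Hm: "H \<in> borel_measurable borel" unfolding H_def by measurable
    have "ennreal (BVN_up p q \<rho>) = integral\<^sup>N lborel H" unfolding H_def by (rule BVN_up_formula[OF r])
    also have "\<dots> = (\<integral>\<^sup>+t. H (0 + (- 1) * t) \<partial>lborel)"
      using nn_integral_real_affine[OF Hm, of "-1" 0] by simp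
    also have "\<dots> = (\<integral>\<^sup>+s. ennreal (std_normal_density s) * indicator {..- p} s * G ((- q - \<rho> * s) / sqrt (1 - \<rho>\<^sup>2)) \<partial>lborel)"
    proof (intro nn_integral_cong)
      fix s :: real
      have e: "\<rho> * (0 + (- 1) * s) - q = - q - \<rho> * s" by simp
      show "H (0 + (- 1) * s) = ennreal (std_normal_density s) * indicator {..- p} s * G ((- q - \<rho> * s) / sqrt (1 - \<rho>\<^sup>2))"
        unfolding H_def e by (simp add: indicator_def)
    qed
    finally show ?thesis using e0 by simp
  qed
  also have "integral\<^sup>N lborel D1 = ennreal (kfun l x y \<rho>)"
  proof -
    have "integral\<^sup>N lborel D1 = (\<integral>\<^sup>+s. ennreal (std_normal_density s) * (ennreal (exp (- l * sqrt x * s - l\<^sup>2 / 2)) * indicator {- p<..} s) * (\<integral>\<^sup>+t. ennreal (std_normal_density ((t - \<rho> * s)/sqrt (1 - \<rho>\<^sup>2)) / sqrt (1 - \<rho>\<^sup>2)) * indicator {..sqrt (x / y) * s} t \<partial>lborel) \<partial>lborel)"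
      unfolding D1_def by (rule pieceF[OF r, where c="\<lambda>s. ennreal (exp (- l * sqrt x * s - l\<^sup>2 / 2)) * indicator {- p<..} s"]) measurable
    also have "\<dots> = (\<integral>\<^sup>+s. ennreal (std_normal_density s) * (ennreal (exp (- l * sqrt x * s - l\<^sup>2 / 2)) * indicator {- (l / (2 * sqrt x))<..} s)
            * G ((sqrt (x / y) * s - \<rho> * s) / sqrt (1 - \<rho>\<^sup>2)) \<partial>lborel)"
      using lemB[OF pp] by (simp add: p_def)
    also have "\<dots> = ennreal (kfun l x y \<rho>)" by (rule lemK[OF l x y r])
    finally show ?thesis .
  qed
  also have "integral\<^sup>N lborel D2 = ennreal (kfun l y x \<rho>)"
  proof -
    have "integral\<^sup>N lborel D2 = (\<integral>\<^sup>+t. ennreal (std_normal_density t) * (ennreal (exp (- l * sqrt y * t - l\<^sup>2 / 2)) * indicator {- q<..} t) * (\<integral>\<^sup>+s. ennreal (std_normal_density ((s - \<rho> * t)/sqrt (1 - \<rho>\<^sup>2)) / sqrt (1 - \<rho>\<^sup>2)) * indicator {..<sqrt (y / x) * t} s \<partial>lborel) \<partial>lborel)"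
      unfolding D2_def by (rule pieceF'[OF r, where c="\<lambda>t. ennreal (exp (- l * sqrt y * t - l\<^sup>2 / 2)) * indicator {- q<..} t"]) measurable
    also have "\<dots> = (\<integral>\<^sup>+s. ennreal (std_normal_density s) * (ennreal (exp (- l * sqrt y * s - l\<^sup>2 / 2)) * indicator {- (l / (2 * sqrt y))<..} s)
            * G ((sqrt (y / x) * s - \<rho> * s) / sqrt (1 - \<rho>\<^sup>2)) \<partial>lborel)"
      using lemBs[OF pp] by (simp add: q_def)
    also have "\<dots> = ennreal (kfun l y x \<rho>)" by (rule lemK[OF l y x r])
    finally show ?thesis .
  qed
  also have "ennreal (BVN_up p q \<rho>) + ennreal (kfun l x y \<rho>) + ennreal (kfun l y x \<rho>)
      = ennreal (BVN_up p q \<rho> + kfun l x y \<rho> + kfun l y x \<rho>)"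
  proof -
    have n0: "BVN_up p q \<rho> \<ge> 0" by (simp add: BVN_up_def)
    have n1: "kfun l x y \<rho> \<ge> 0" "kfun l y x \<rho> \<ge> 0" by (rule kfun_nonneg)+
    have "ennreal (BVN_up p q \<rho> + kfun l x y \<rho> + kfun l y x \<rho>) = ennreal (BVN_up p q \<rho> + kfun l x y \<rho>) + ennreal (kfun l y x \<rho>)"
      using n0 n1 by (intro ennreal_plus) simp_all
    also have "ennreal (BVN_up p q \<rho> + kfun l x y \<rho>) = ennreal (BVN_up p q \<rho>) + ennreal (kfun l x y \<rho>)"
      using n0 n1 by (intro ennreal_plus) simp_all
    finally show ?thesis by simp
  qed
  finally show ?thesis unfolding p_def q_def
    using kfun_nonneg[of l x y \<rho>] kfun_nonneg[of l y x \<rho>] by (simp add: BVN_up_def del: ennreal_plus)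
qed

end
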